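(* Let $\langle A, \leq, \otimes, \ominus, \mathbf{1}\rangle$ be a residuated partially ordered monoid with bottom element $\bot$, let $k\geq1$ and $a = a_1\ldots a_k$, $b = b_1\ldots b_k \in Lex_k(A)$. If $\delta(a,b) < \gamma(a,b)$, then the residuation $a \ominus_k b$ of $a$ by $b$ in $\langle Lex_k(A), \leq_k, \otimes^k, \mathbf{1}^k\rangle$ exists and equals $$(a_1 \ominus b_1) \ldots (a_{\delta(a,b)} \ominus b_{\delta(a,b)})\,\Big(\bigvee Lex_{k-\delta(a,b)}(A)\Big),$$ that is, this tuple $r$ lies in $Lex_k(A)$ and for every $c \in Lex_k(A)$, $b \otimes^k c \leq_k a$ iff $c \leq_k r$.
   Context: A residuated partially ordered monoid $\langle A, \leq, \otimes, \ominus, \mathbf{1}\rangle$ consists of a partial order $\langle A,\leq\rangle$, a commutative monoid $\langle A,\otimes,\mathbf{1}\rangle$, and a binary operation $\ominus$ with $b \otimes c \leq a$ iff $c \leq a \ominus b$ for all $a,b,c\in A$. $a<b$ means $a\leq b$, $a\neq b$. $I(A) = \{c \in A \mid \forall a,b \in A.\ a \otimes c = b \otimes c \Rightarrow a = b\}$, $C(A)=A\setminus I(A)$. $Lex_k(A)\subseteq A^k$: $Lex_1(A) = A$, $Lex_{k+1}(A) = I(A)\, Lex_k(A) \cup C(A)\{\bot\}^k$ (concatenations of sequences; $\{\bot\}^k$ the singleton of $k$ copies of $\bot$). The order $\leq_k$: $\leq_1=\leq$, and for $k\geq2$, $a_1 \ldots a_k \leq_k b_1 \ldots b_k$ iff $a_1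 < b_1$, or $a_1 = b_1$ and $a_2 \ldots a_k \leq_{k-1} b_2 \ldots b_k$. $\otimes^k$ is componentwise, $\mathbf{1}^k=\mathbf{1}\ldots\mathbf{1}$. $\bigvee Lex_n(A)$ denotes the greatest element of $Lex_n(A)$ with respect to $\leq_n$ (the empty sequence when $n=0$). For $a,b\in Lex_k(A)$: $\gamma(a,b) = \min\{ i \mid a_i \ominus b_i \in C(A)\}$ and $\delta(a,b) = \min\{ i \mid (a_i \ominus b_i) \otimes b_i < a_i\}$, each equal to $k+1$ if the set is empty. *)

theory Defs
  imports Main
begin

definition rpom :: "('a \<Rightarrow> 'a \<Rightarrow> bool) \<Rightarrow> ('a \<Rightarrow> 'a \<Rightarrow> 'a) \<Rightarrow> ('a \<Rightarrow> 'a \<Rightarrow> 'a) \<Rightarrow> 'a \<Rightarrow> bool" where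
  "rpom le mult res one \<longleftrightarrow>
     (\<forall>a. le a a) \<and> (\<forall>a b c. le a b \<longrightarrow> le b c \<longrightarrow> le a c) \<and> (\<forall>a b. le a b \<longrightarrow> le b a \<longrightarrow> a = b) \<and>
     (\<forall>a b c. mult (mult a b) c = mult a (mult b c)) \<and> (\<forall>a b. mult a b = mult b a) \<and>
     (\<forall>a. mult one a = a) \<and>
     (\<forall>a b c. le (mult b c) a \<longleftrightarrow> le c (res a b))"

definition lt :: "('a \<Rightarrow> 'a \<Rightarrow> bool) \<Rightarrow> 'a \<Rightarrow> 'a \<Rightarrow> bool" where
  "lt le a b \<longleftrightarrow> le a b \<and> a \<noteq> b"

definition Icanc :: "('a \<Rightarrow> 'a \<Rightarrow> 'a) \<Rightarrow> 'a set" where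
  "Icanc mult = {c. \<forall>a b. mult a c = mult b c \<longrightarrow> a = b}"

definition Cnc :: "('a \<Rightarrow> 'a \<Rightarrow> 'a) \<Rightarrow> 'a set" where
  "Cnc mult = UNIV - Icanc mult"

text \<open>Lex_k(A) as a set of lists of length k. Lex_0 = {[]}, so that
  Lex_1 = I(A) \<union> C(A) = A, and Lex_(k+1) = I(A) Lex_k(A) \<union> C(A) {bt}^k.\<close>
fun Lex :: "('a \<Rightarrow> 'a \<Rightarrow> 'a) \<Rightarrow> 'a \<Rightarrow> nat \<Rightarrow> 'a list set" where
  "Lex mult bt 0 = {[]}"
| "Lex mult bt (Suc k) =
     {c # s | c s. c \<in> Icanc mult \<and> s \<in> Lex mult bt k}
     \<union> {c # replicate k bt | c. c \<in> Cnc mult}"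

fun lex_le :: "('a \<Rightarrow> 'a \<Rightarrow> bool) \<Rightarrow> 'a list \<Rightarrow> 'a list \<Rightarrow> bool" where
  "lex_le le [] [] = True"
| "lex_le le (a # as) (b # bs) = (lt le a b \<or> (a = b \<and> lex_le le as bs))"
| "lex_le le _ _ = False"

definition lex_top :: "('a \<Rightarrow> 'a \<Rightarrow> bool) \<Rightarrow> ('a \<Rightarrow> 'a \<Rightarrow> 'a) \<Rightarrow> 'a \<Rightarrow> nat \<Rightarrow> 'a list" where
  "lex_top le mult bt n =
     (THE g. g \<in> Lex mult bt n \<and> (\<forall>x \<in> Lex mult bt n. lex_le le x g))"

text \<open>gamma and delta, 1-indexed: position i refers to list entry i-1.\<close>
definition gamma :: "('a \<Rightarrow> 'a \<Rightarrow> 'a) \<Rightarrow> ('a \<Rightarrow> 'a \<Rightarrow> 'a) \<Rightarrow> 'a list \<Rightarrow> 'a list \<Rightarrow> nat" where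
  "gamma mult res a b =
     (let P = (\<lambda>i. 1 \<le> i \<and> i \<le> length a \<and> res (a ! (i-1)) (b ! (i-1)) \<in> Cnc mult)
      in if \<exists>i. P i then (LEAST i. P i) else length a + 1)"

definition delta :: "('a \<Rightarrow> 'a \<Rightarrow> bool) \<Rightarrow> ('a \<Rightarrow> 'a \<Rightarrow> 'a) \<Rightarrow> ('a \<Rightarrow> 'a \<Rightarrow> 'a) \<Rightarrow> 'a list \<Rightarrow> 'a list \<Rightarrow> nat" where
  "delta le mult res a b =
     (let P = (\<lambda>i. 1 \<le> i \<and> i \<le> length a \<and>
                  lt le (mult (res (a ! (i-1)) (b ! (i-1))) (b ! (i-1))) (a ! (i-1)))
      in if \<exists>i. P i then (LEAST i. P i) else length a + 1)"

end

theory Submission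
  imports Defs
begin

lemma rp:
  assumes "rpom le mult res one"
  shows rp_refl: "le x x" and rp_trans: "le x y \<Longrightarrow> le y z \<Longrightarrow> le x z"
    and rp_antisym: "le x y \<Longrightarrow> le y x \<Longrightarrow> x = y"
    and rp_assoc: "mult (mult x y) z = mult x (mult y z)"
    and rp_comm: "mult x y = mult y x"
    and rp_res: "le (mult y z) x \<longleftrightarrow> le z (res x y)"
  using assms unfolding rpom_def by blast+

lemma rp_mono:
  assumes R: "rpom le mult res one" and "le x y"
  shows "le (mult b x) (mult b y)"
proof -
  have "le y (res (mult b y) b)" using rp_res[OF R] rp_refl[OF R] by blast
  then have "le x (res (mult b y) b)" using rp_trans[OF R] assms(2) by blast
  then show ?thesis using rp_res[OF R] by blast
qed

lemma rp_resle:
  assumes R: "rpom le mult res one"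
  shows "le (mult (res x y) y) x"
  using rp_res[OF R] rp_refl[OF R] rp_comm[OF R] by metis

lemma rp_bt:
  assumes R: "rpom le mult res one" and B: "\<forall>x. le bt x"
  shows "mult x bt = bt"
proof -
  have "le bt (res bt x)" using B by blast
  then have "le (mult x bt) bt" using rp_res[OF R] by blast
  then show ?thesis using B rp_antisym[OF R] by blast
qed

lemma Lex_length: "x \<in> Lex mult bt n \<Longrightarrow> length x = n"
  by (induction n arbitrary: x) auto

lemma Lex_bt: "x \<in> Lex mult bt n \<Longrightarrow> i < j \<Longrightarrow> j < n \<Longrightarrow> x ! i \<in> Cnc mult \<Longrightarrow> x ! j = bt"
proof (induction n arbitrary: x i j)
  case 0
  then show ?case by simp
next
  case (Suc n)
  from Suc.prems(1) show ?case
  proof (auto)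
    fix c s assume "c \<in> Icanc mult" "s \<in> Lex mult bt n" "x = c # s"
    then show "(c # s) ! j = bt" using Suc by (cases i; cases j) (auto simp: Cnc_def)
  next
    fix c assume "x = c # replicate n bt"
    then show "(c # replicate n bt) ! j = bt" using Suc by (cases j) auto
  qed
qed

lemma Lex_tail: "z # cs \<in> Lex mult bt (Suc m) \<Longrightarrow> z \<in> Icanc mult \<Longrightarrow> cs \<in> Lex mult bt m"
  by (auto simp: Cnc_def)

lemma Lex_app: "length p = d \<Longrightarrow> (\<forall>e \<in> set p. e \<in> Icanc mult) \<Longrightarrow> s \<in> Lex mult bt m
   \<Longrightarrow> p @ s \<in> Lex mult bt (d + m)"
  by (induction p arbitrary: d) auto

lemma lex_le_refl: "lex_le le x x"
  by (induction x) auto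

lemma lex_le_antisym:
  assumes R: "rpom le mult res one"
  shows "lex_le le x y \<Longrightarrow> lex_le le y x \<Longrightarrow> x = y"
proof (induction x arbitrary: y)
  case Nil
  then show ?case by (cases y) auto
next
  case (Cons u us)
  then show ?case
    by (cases y) (auto simp: lt_def dest: rp_antisym[OF R])
qed

lemma top_exists:
  assumes R: "rpom le mult res one" and B: "\<forall>x. le bt x"
  shows "\<exists>g. g \<in> Lex mult bt n \<and> (\<forall>x \<in> Lex mult bt n. lex_le le x g)"
proof (induction n)
  case 0
  then show ?case by auto
next
  case (Suc m)
  define T where "T = res bt bt"
  have Ttop: "le u T" for u
    using rp_res[OF R, of bt u bt] rp_bt[OF R B, of u] rp_comm[OF R, of bt u] B T_def by metis
  show ?case
  proof (cases "T \<in> Icanc mult")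
    case True
    from Suc obtain g where g: "g \<in> Lex mult bt m" "\<forall>x \<in> Lex mult bt m. lex_le le x g" by blast
    have "T # g \<in> Lex mult bt (Suc m)" using True g by auto
    moreover have "lex_le le x (T # g)" if "x \<in> Lex mult bt (Suc m)" for x
      using that g True Ttop by (auto simp: lt_def Cnc_def)
    ultimately show ?thesis by blast
  next
    case False
    have "T # replicate m bt \<in> Lex mult bt (Suc m)" using False by (auto simp: Cnc_def)
    moreover have "lex_le le x (T # replicate m bt)" if "x \<in> Lex mult bt (Suc m)" for x
      using that False Ttop by (auto simp: lt_def Cnc_def lex_le_refl)
    ultimately show ?thesis by blast
  qed
qed

lemma top_prop:
  assumes R: "rpom le mult res one" and B: "\<forall>x. le bt x"
  shows "lex_top le mult bt n \<in> Lex mult bt n \<and> (\<forall>x \<in> Lex mult bt n. lex_le le x (lex_top le mult bt n))"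
proof -
  obtain g where g: "g \<in> Lex mult bt n \<and> (\<forall>x \<in> Lex mult bt n. lex_le le x g)"
    using top_exists[OF R B] by blast
  show ?thesis unfolding lex_top_def
    apply (rule theI[of _ g])
    using g apply blast
    using g lex_le_antisym[OF R] by blast
qed

lemma main_step:
  assumes R: "rpom le mult res one"
  shows "length b = length a \<Longrightarrow> c \<in> Lex mult bt (length a) \<Longrightarrow> 0 < d \<Longrightarrow> d \<le> length a \<Longrightarrow>
  (\<forall>i<d. res (a!i) (b!i) \<in> Icanc mult) \<Longrightarrow>
  (\<forall>i<d-1. mult (res (a!i) (b!i)) (b!i) = a!i \<and> b!i \<in> Icanc mult) \<Longrightarrow>
  lt le (mult (res (a!(d-1)) (b!(d-1))) (b!(d-1))) (a!(d-1)) \<Longrightarrow>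
  (\<forall>x \<in> Lex mult bt (length a - d). lex_le le x (lex_top le mult bt (length a - d))) \<Longrightarrow>
  lex_le le (map2 mult b c) a \<longleftrightarrow>
   lex_le le c (map2 res (take d a) (take d b) @ lex_top le mult bt (length a - d))"
proof (induction a arbitrary: b c d)
  case Nil
  then show ?case by simp
next
  case (Cons x as)
  obtain y bs where b: "b = y # bs" using Cons.prems(1) by (cases b) auto
  obtain z cs where c: "c = z # cs" using Cons.prems(2) Lex_length[OF Cons.prems(2)] by (cases c) auto
  obtain d' where d: "d = Suc d'" using Cons.prems(3) by (cases d) auto
  define w where "w = res x y"
  have wI: "w \<in> Icanc mult" using Cons.prems(5) unfolding b d w_def by auto
  have zw: "le (mult y z) x \<longleftrightarrow> le z w" using rp_res[OF R] w_def by blast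
  have cL: "c \<in> Lex mult bt (Suc (length as))" using Cons.prems(2) by simp
  have cs: "cs \<in> Lex mult bt (length as)" if "z = w"
    using Lex_tail[of z cs mult bt "length as"] cL c wI that by simp
  have goal: "lt le (mult y z) x \<or> (mult y z = x \<and> lex_le le (map2 mult bs cs) as) \<longleftrightarrow>
     lt le z w \<or> (z = w \<and> lex_le le cs (map2 res (take d' as) (take d' bs) @ lex_top le mult bt (length as - d')))"
  proof (cases "d' = 0")
    case True
    have strict: "lt le (mult w y) x" using Cons.prems(7) unfolding b d w_def True by simp
    have top: "\<forall>x \<in> Lex mult bt (length as). lex_le le x (lex_top le mult bt (length as))"
      using Cons.prems(8) unfolding d True by simp
    show ?thesis
    proof (cases "z = w")
      case True
      then show ?thesis using strict top cs True rp_comm[OF R, of w y] \<open>d' = 0\<close> by auto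
    next
      case False
      have "le z w \<Longrightarrow> lt le (mult y z) x"
      proof -
        assume "le z w"
        then have a1: "le (mult y z) (mult y w)" using rp_mono[OF R] by blast
        have a2: "le (mult y w) x" "mult y w \<noteq> x" using strict rp_comm[OF R, of w y] by (auto simp: lt_def)
        have "le (mult y z) x" using a1 a2 rp_trans[OF R] by blast
        moreover have "mult y z \<noteq> x" using a1 a2 rp_antisym[OF R] by blast
        ultimately show ?thesis by (simp add: lt_def)
      qed
      then show ?thesis using False zw rp_refl[OF R] by (auto simp: lt_def)
    qed
  next
    case False
    have eq: "mult w y = x" and yI: "y \<in> Icanc mult"
      using Cons.prems(6) False unfolding b d w_def by auto
    have eqiff: "mult y z = x \<longleftrightarrow> z = w"
    proof
      assume "mult y z = x"
      then have "mult z y = mult w y" using eq rp_comm[OF R] by metis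
      then show "z = w" using yI by (auto simp: Icanc_def)
    next
      assume "z = w" then show "mult y z = x" using eq rp_comm[OF R] by metis
    qed
    show ?thesis
    proof (cases "z = w")
      case True
      have IH: "lex_le le (map2 mult bs cs) as \<longleftrightarrow>
        lex_le le cs (map2 res (take d' as) (take d' bs) @ lex_top le mult bt (length as - d'))"
      proof (rule Cons.IH)
        show "length bs = length as" using Cons.prems(1) b by simp
        show "cs \<in> Lex mult bt (length as)" using cs True .
        show "0 < d'" using False by simp
        show "d' \<le> length as" using Cons.prems(4) d by simp
        show "\<forall>i<d'. res (as ! i) (bs ! i) \<in> Icanc mult"
        proof (intro allI impI)
          fix i assume "i < d'"
          then show "res (as ! i) (bs ! i) \<in> Icanc mult"
            using Cons.prems(5) unfolding b d by (metis Suc_less_eq nth_Cons_Suc)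
        qed
        show "\<forall>i<d' - 1. mult (res (as ! i) (bs ! i)) (bs ! i) = as ! i \<and> bs ! i \<in> Icanc mult"
        proof (intro allI impI)
          fix i assume "i < d' - 1"
          then have "Suc i < d - 1" using d by simp
          then show "mult (res (as ! i) (bs ! i)) (bs ! i) = as ! i \<and> bs ! i \<in> Icanc mult"
            using Cons.prems(6) unfolding b by (metis nth_Cons_Suc)
        qed
        show "lt le (mult (res (as ! (d' - 1)) (bs ! (d' - 1))) (bs ! (d' - 1))) (as ! (d' - 1))"
          using Cons.prems(7) False unfolding b d by (metis Suc_pred' nth_Cons_Suc diff_Suc_1 gr0I)
        show "\<forall>x\<in>Lex mult bt (length as - d'). lex_le le x (lex_top le mult bt (length as - d'))"
          using Cons.prems(8) d by simp
      qed
      then show ?thesis using True eqiff by (auto simp: lt_def)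
    next
      case False
      then show ?thesis using eqiff zw by (auto simp: lt_def)
    qed
  qed
  show ?case using goal unfolding b c d w_def by simp
qed

lemma canc_factor:
  assumes R: "rpom le mult res one" and "mult r y \<in> Icanc mult"
  shows "y \<in> Icanc mult"
  unfolding Icanc_def
proof (intro CollectI allI impI)
  fix p q assume "mult p y = mult q y"
  then have "mult p (mult r y) = mult q (mult r y)"
    using rp_assoc[OF R] rp_comm[OF R] by metis
  then show "p = q" using assms(2) by (auto simp: Icanc_def)
qed

theorem proposition3:
  fixes le :: "'a \<Rightarrow> 'a \<Rightarrow> bool" and mult res :: "'a \<Rightarrow> 'a \<Rightarrow> 'a"
    and one bt :: 'a and k :: nat and a b :: "'a list"
  assumes "rpom le mult res one"
    and "\<forall>x. le bt x"
    and "k \<ge> 1"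
    and "a \<in> Lex mult bt k" and "b \<in> Lex mult bt k"
    and "delta le mult res a b < gamma mult res a b"
  shows "let d = delta le mult res a b;
             r = map2 res (take d a) (take d b) @ lex_top le mult bt (k - d)
         in r \<in> Lex mult bt k \<and>
            (\<forall>c \<in> Lex mult bt k. lex_le le (map2 mult b c) a \<longleftrightarrow> lex_le le c r)"
proof -
  note R = assms(1)
  have la: "length a = k" and lb: "length b = k" using Lex_length[OF assms(4)] Lex_length[OF assms(5)] by auto
  define d where "d = delta le mult res a b"
  define P where "P = (\<lambda>i. 1 \<le> i \<and> i \<le> length a \<and>
                  lt le (mult (res (a ! (i-1)) (b ! (i-1))) (b ! (i-1))) (a ! (i-1)))"
  define Q where "Q = (\<lambda>i. 1 \<le> i \<and> i \<le> length a \<and> res (a ! (i-1)) (b ! (i-1)) \<in> Cnc mult)"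
  have dd: "d = (if \<exists>i. P i then (LEAST i. P i) else length a + 1)"
    unfolding d_def delta_def P_def Let_def by simp
  have gg: "gamma mult res a b = (if \<exists>i. Q i then (LEAST i. Q i) else length a + 1)"
    unfolding gamma_def Q_def Let_def by simp
  have gle: "gamma mult res a b \<le> length a + 1"
  proof (cases "\<exists>i. Q i")
    case True
    then obtain i where "Q i" by blast
    then have "(LEAST i. Q i) \<le> i" by (rule Least_le)
    then show ?thesis unfolding gg using True \<open>Q i\<close> by (simp add: Q_def)
  next
    case False
    then show ?thesis unfolding gg by (simp only: if_False not_ex[symmetric])
  qed
  have ex: "\<exists>i. P i"
  proof (rule ccontr)
    assume "\<not> (\<exists>i. P i)"
    then have "d = length a + 1" using dd by simp
    then show False using assms(6) gle d_def by simp
  qed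
  have dL: "d = (LEAST i. P i)" using dd ex by simp
  have dP: "P d" unfolding dL using ex by (rule LeastI_ex)
  have dmin: "\<not> P i" if "i < d" for i
    using that unfolding dL by (rule not_less_Least)
  have d1: "1 \<le> d" "d \<le> k" using dP la by (auto simp: P_def)
  have noQ: "\<not> Q i" if "i \<le> d" for i
  proof
    assume "Q i"
    then have "gamma mult res a b \<le> i" unfolding gg using Least_le[of Q i] by auto
    then show False using that assms(6) d_def by simp
  qed
  have h5: "\<forall>i<d. res (a!i) (b!i) \<in> Icanc mult"
  proof (intro allI impI)
    fix i assume "i < d"
    then have "\<not> Q (Suc i)" using noQ by simp
    then show "res (a!i) (b!i) \<in> Icanc mult" using \<open>i < d\<close> d1 la by (auto simp: Q_def Cnc_def)
  qed
  have h7: "lt le (mult (res (a!(d-1)) (b!(d-1))) (b!(d-1))) (a!(d-1))" using dP by (simp add: P_def)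
  have h6a: "mult (res (a!i) (b!i)) (b!i) = a!i" if "i < d - 1" for i
  proof -
    have "\<not> P (Suc i)" using dmin that by simp
    then have "\<not> lt le (mult (res (a!i) (b!i)) (b!i)) (a!i)" using that d1 la by (auto simp: P_def)
    then show ?thesis using rp_resle[OF R] by (auto simp: lt_def)
  qed
  have h6b: "b!i \<in> Icanc mult" if "i < d - 1" for i
  proof (rule ccontr)
    assume "b!i \<notin> Icanc mult"
    then have bC: "b!i \<in> Cnc mult" by (simp add: Cnc_def)
    have "a!i \<notin> Icanc mult"
      using canc_factor[OF R, of "res (a!i) (b!i)" "b!i"] h6a[OF that] \<open>b!i \<notin> Icanc mult\<close> by auto
    then have aC: "a!i \<in> Cnc mult" by (simp add: Cnc_def)
    have "i < d - 1" "d - 1 < k" using that d1 by auto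
    then have "a!(d-1) = bt" "b!(d-1) = bt"
      using Lex_bt[OF assms(4) _ _ aC] Lex_bt[OF assms(5) _ _ bC] by auto
    then show False using h7 rp_bt[OF R assms(2)] by (simp add: lt_def)
  qed
  have top: "lex_top le mult bt (k - d) \<in> Lex mult bt (k - d) \<and>
     (\<forall>x \<in> Lex mult bt (k - d). lex_le le x (lex_top le mult bt (k - d)))"
    using top_prop[OF R assms(2)] by blast
  have rL: "map2 res (take d a) (take d b) @ lex_top le mult bt (k - d) \<in> Lex mult bt k"
  proof -
    have "map2 res (take d a) (take d b) @ lex_top le mult bt (k - d) \<in> Lex mult bt (d + (k - d))"
    proof (rule Lex_app)
      show "length (map2 res (take d a) (take d b)) = d" using la lb d1 by simp
      show "\<forall>e\<in>set (map2 res (take d a) (take d b)). e \<in> Icanc mult"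
        using h5 la lb d1 by (auto simp: in_set_conv_nth)
      show "lex_top le mult bt (k - d) \<in> Lex mult bt (k - d)" using top by blast
    qed
    then show ?thesis using d1 by simp
  qed
  have eqv: "\<forall>c \<in> Lex mult bt k. lex_le le (map2 mult b c) a \<longleftrightarrow>
       lex_le le c (map2 res (take d a) (take d b) @ lex_top le mult bt (k - d))"
  proof
    fix c assume "c \<in> Lex mult bt k"
    have "lex_le le (map2 mult b c) a \<longleftrightarrow>
       lex_le le c (map2 res (take d a) (take d b) @ lex_top le mult bt (length a - d))"
    proof (rule main_step[OF R])
      show "length b = length a" using la lb by simp
      show "c \<in> Lex mult bt (length a)" using \<open>c \<in> Lex mult bt k\<close> la by simp
      show "0 < d" using d1 by simp
      show "d \<le> length a" using d1 la by simp
      show "\<forall>i<d. res (a!i) (b!i) \<in> Icanc mult" by (rule h5)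
      show "\<forall>i<d-1. mult (res (a!i) (b!i)) (b!i) = a!i \<and> b!i \<in> Icanc mult"
        using h6a h6b by blast
      show "lt le (mult (res (a!(d-1)) (b!(d-1))) (b!(d-1))) (a!(d-1))" by (rule h7)
      show "\<forall>x \<in> Lex mult bt (length a - d). lex_le le x (lex_top le mult bt (length a - d))"
        using top la by simp
    qed
    then show "lex_le le (map2 mult b c) a \<longleftrightarrow>
       lex_le le c (map2 res (take d a) (take d b) @ lex_top le mult bt (k - d))" using la by simp
  qed
  show ?thesis using rL eqv unfolding d_def Let_def by simp
qed

end
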